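(* Let $H$ be a real Hilbert space, $I=\{1,\dots,M\}$, let $f_i,h_i,T_i$ ($i\in I$) satisfy Assumption (A1)–(A4) and the parameters satisfy Condition (C) (both described below). Consider the sequences generated by the Distributed Accelerated Incremental Algorithm below, and assume that for each $i\in I$ the sequence $\{y^{(i)}_n\}$ is bounded. Then the sequences $\{T_i(y^{(i)}_n)\}$, $\{x_n\}$, $\{w^{(i)}_n\}$, $\{z^{(i)}_n\}$ and $\{d^{(i)}_n\}$ ($i\in I$) are bounded.
   Context: Assumption (A1): each $f_i:H\to\mathbb{R}$ is continuous and convex. (A2): each $h_i:H\to\mathbb{R}$ is convex and Fréchet differentiable, and $\nabla h_i$ is $(1/L_i)$-Lipschitz continuous for some $L_i>0$. (A3): each $T_i:H\to H$ is firmly nonexpansive, i.e. $\|T_ix-T_iy\|^2\le\langle T_ix-T_iy,x-y\rangle$ for all $x,y$. (A4): $S=\bigcap_{i=1}^M\mathrm{Fix}\,T_i\neq\emptyset$ and, with $\psi=\sum_{i=1}^M(f_i+h_i)$, $\Omega=\{\hat x\in S:\psi(\hat x)=\min_{x\in S}\psi(x)\}\neq\emptyset$. Condition (C): $\{\theta_n\},\{\lambda_n\},\{\beta_n\},\{\alpha_n\}$ are decreasing real sequences converging to $0$ with $\theta_n\in[0,1)$, $\lambda_n\in(0,2\min_{i\in I}L_i]$, $\beta_n\in(0,1]$, $\alpha_n\in(0,1]$, and: (C1) $\sum_n\alpha_n=\infty$; (C2) $\lim_n\frac{1}{\alpha_{n+1}}\big|\frac{1}{\lambda_{n+1}}-\frac{1}{\lambda_n}\big|=0$;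 (C3) $\lim_n\frac{1}{\lambda_{n+1}}\big|1-\frac{\alpha_n}{\alpha_{n+1}}\big|=0$; (C4) $\lim_n\frac{\alpha_n}{\lambda_n}=0$; (C5) $\lim_n\frac{\theta_n}{\alpha_{n+1}\lambda_{n+1}}=0$; (C6) $\frac{\lambda_n}{\lambda_{n+1}}\le\sigma$ for some $\sigma\ge1$; (C7) $\lim_n\frac{\beta_n}{\alpha_{n+1}}=0$. $\mathrm{prox}_{\lambda g}(x)=\arg\min_y\{g(y)+\frac{1}{2\lambda}\|x-y\|^2\}$. Distributed Accelerated Incremental Algorithm: choose $x_1\in H$, $w^{(i)}_0,z^{(i)}_0,u^{(i)}\in H$ and set $d^{(i)}_1=-\nabla h_i(z^{(i)}_0)$ ($i\in I$). For $n=1,2,\dots$: set $w^{(1)}_n=x_n$; for $i=1,\dots,M$ compute $z^{(i)}_n=w^{(i)}_n+\theta_n(w^{(i)}_n-w^{(i)}_{n-1})$, $d^{(i)}_{n+1}=-\nabla h_i(z^{(i)}_n)+\beta_nd^{(i)}_n$, $y^{(i)}_n=\mathrm{prox}_{\lambda_nf_i}(z^{(i)}_n+\lambda_nd^{(i)}_{n+1})$, $w^{(i+1)}_n=\alpha_nu^{(i)}+(1-\alpha_n)T_i(y^{(i)}_n)$; then set $x_{n+1}=w^{(M+1)}_n$. *)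

theory Defs
  imports "HOL-Analysis.Analysis"
begin

text \<open>Proximal operator: prox_{lam g}(x) = argmin_y { g y + (1/(2 lam)) * norm(x - y)^2 }.
  For continuous convex g and lam > 0 on a Hilbert space the minimiser exists and is unique.\<close>
definition prox :: "real \<Rightarrow> ('a::real_normed_vector \<Rightarrow> real) \<Rightarrow> 'a \<Rightarrow> 'a" where
  "prox lam g x = (SOME y. \<forall>v. g y + (1 / (2 * lam)) * (norm (x - y))\<^sup>2
                               \<le> g v + (1 / (2 * lam)) * (norm (x - v))\<^sup>2)"

definition firmly_nonexpansive :: "('a::real_inner \<Rightarrow> 'a) \<Rightarrow> bool" where
  "firmly_nonexpansive T \<longleftrightarrow> (\<forall>x y. (norm (T x - T y))\<^sup>2 \<le> inner (T x - T y) (x - y))"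

definition Fix :: "('a \<Rightarrow> 'a) \<Rightarrow> 'a set" where
  "Fix T = {x. T x = x}"

end

theory Submission
  imports Defs
begin

theorem lemma2:
  fixes M :: nat
    and f h :: "nat \<Rightarrow> 'a::{real_inner, complete_space} \<Rightarrow> real"
    and gh :: "nat \<Rightarrow> 'a \<Rightarrow> 'a"
    and T :: "nat \<Rightarrow> 'a \<Rightarrow> 'a"
    and L :: "nat \<Rightarrow> real"
    and \<theta> lam \<beta> \<alpha> :: "nat \<Rightarrow> real"
    and x :: "nat \<Rightarrow> 'a"
    and w z d y :: "nat \<Rightarrow> nat \<Rightarrow> 'a"
    and u :: "nat \<Rightarrow> 'a"
  assumes M: "M \<ge> 1"
    \<comment> \<open>(A1)\<close>
    and A1: "\<forall>i\<in>{1..M}. continuous_on UNIV (f i) \<and> convex_on UNIV (f i)"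
    \<comment> \<open>(A2): h i convex, Frechet differentiable with gradient gh i, gradient (1/L i)-Lipschitz\<close>
    and A2_convex: "\<forall>i\<in>{1..M}. convex_on UNIV (h i)"
    and A2_grad: "\<forall>i\<in>{1..M}. \<forall>p. (h i has_derivative (\<lambda>v. inner (gh i p) v)) (at p)"
    and A2_L: "\<forall>i\<in>{1..M}. L i > 0"
    and A2_Lip: "\<forall>i\<in>{1..M}. \<forall>p q. norm (gh i p - gh i q) \<le> (1 / L i) * norm (p - q)"
    \<comment> \<open>(A3)\<close>
    and A3: "\<forall>i\<in>{1..M}. firmly_nonexpansive (T i)"
    \<comment> \<open>(A4)\<close>
    and A4_S: "(\<Inter>i\<in>{1..M}. Fix (T i)) \<noteq> {}"
    and A4_Omega: "\<exists>xh\<in>(\<Inter>i\<in>{1..M}. Fix (T i)). \<forall>v\<in>(\<Inter>i\<in>{1..M}. Fix (T i)).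
                     (\<Sum>i\<in>{1..M}. f i xh + h i xh) \<le> (\<Sum>i\<in>{1..M}. f i v + h i v)"
    \<comment> \<open>Condition (C): sequences indexed from n = 1\<close>
    and C_dec: "\<forall>n\<ge>1. \<theta> (n+1) \<le> \<theta> n \<and> lam (n+1) \<le> lam n \<and> \<beta> (n+1) \<le> \<beta> n \<and> \<alpha> (n+1) \<le> \<alpha> n"
    and C_lim: "\<theta> \<longlonglongrightarrow> 0" "lam \<longlonglongrightarrow> 0" "\<beta> \<longlonglongrightarrow> 0" "\<alpha> \<longlonglongrightarrow> 0"
    and C_range: "\<forall>n\<ge>1. 0 \<le> \<theta> n \<and> \<theta> n < 1 \<and> 0 < lam n \<and> lam n \<le> 2 * Min (L ` {1..M})
                    \<and> 0 < \<beta> n \<and> \<beta> n \<le> 1 \<and> 0 < \<alpha> n \<and> \<alpha> n \<le> 1"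
    and C1: "filterlim (\<lambda>N. \<Sum>n=1..N. \<alpha> n) at_top sequentially"
    and C2: "(\<lambda>n. (1 / \<alpha> (n+1)) * \<bar>1 / lam (n+1) - 1 / lam n\<bar>) \<longlonglongrightarrow> 0"
    and C3: "(\<lambda>n. (1 / lam (n+1)) * \<bar>1 - \<alpha> n / \<alpha> (n+1)\<bar>) \<longlonglongrightarrow> 0"
    and C4: "(\<lambda>n. \<alpha> n / lam n) \<longlonglongrightarrow> 0"
    and C5: "(\<lambda>n. \<theta> n / (\<alpha> (n+1) * lam (n+1))) \<longlonglongrightarrow> 0"
    and C6: "\<exists>\<sigma>\<ge>1. \<forall>n\<ge>1. lam n / lam (n+1) \<le> \<sigma>"
    and C7: "(\<lambda>n. \<beta> n / \<alpha> (n+1)) \<longlonglongrightarrow> 0"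
    \<comment> \<open>The algorithm (x 1, w i 0, z i 0, u i arbitrary initial data)\<close>
    and alg_d1: "\<forall>i\<in>{1..M}. d i 1 = - gh i (z i 0)"
    and alg_w1: "\<forall>n\<ge>1. w 1 n = x n"
    and alg_z: "\<forall>n\<ge>1. \<forall>i\<in>{1..M}. z i n = w i n + \<theta> n *\<^sub>R (w i n - w i (n-1))"
    and alg_d: "\<forall>n\<ge>1. \<forall>i\<in>{1..M}. d i (n+1) = - gh i (z i n) + \<beta> n *\<^sub>R d i n"
    and alg_y: "\<forall>n\<ge>1. \<forall>i\<in>{1..M}. y i n = prox (lam n) (f i) (z i n + lam n *\<^sub>R d i (n+1))"
    and alg_w: "\<forall>n\<ge>1. \<forall>i\<in>{1..M}. w (i+1) n = \<alpha> n *\<^sub>R u i + (1 - \<alpha> n) *\<^sub>R T i (y i n)"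
    and alg_x: "\<forall>n\<ge>1. x (n+1) = w (M+1) n"
    \<comment> \<open>Boundedness hypothesis\<close>
    and y_bdd: "\<forall>i\<in>{1..M}. bounded ((\<lambda>n. y i n) ` {1..})"
  shows "(\<forall>i\<in>{1..M}. bounded ((\<lambda>n. T i (y i n)) ` {1..}))
       \<and> bounded ((\<lambda>n. x n) ` {1..})
       \<and> (\<forall>i\<in>{1..M}. bounded ((\<lambda>n. w i n) ` {1..}))
       \<and> (\<forall>i\<in>{1..M}. bounded ((\<lambda>n. z i n) ` {1..}))
       \<and> (\<forall>i\<in>{1..M}. bounded ((\<lambda>n. d i n) ` {1..}))"
proof -
  have nonexp: "norm (T i a - T i b) \<le> norm (a - b)" if "i \<in> {1..M}" for i a b
  proof -
    have fi: "(norm (T i a - T i b))\<^sup>2 \<le> inner (T i a - T i b) (a - b)"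
      using A3 that unfolding firmly_nonexpansive_def by blast
    also have "\<dots> \<le> norm (T i a - T i b) * norm (a - b)" by (rule norm_cauchy_schwarz)
    finally have "norm (T i a - T i b) * norm (T i a - T i b) \<le> norm (T i a - T i b) * norm (a - b)"
      by (simp add: power2_eq_square)
    then show ?thesis
      by (cases "norm (T i a - T i b) = 0") (auto simp: mult_le_cancel_left)
  qed
  obtain p where p: "\<forall>i\<in>{1..M}. T i p = p" using A4_S unfolding Fix_def by auto
  have "\<forall>i\<in>{1..M}. \<exists>B. \<forall>n\<ge>1. norm (y i n) \<le> B"
    using y_bdd unfolding bounded_iff by (metis atLeast_iff imageI)
  then obtain Y where Y: "\<forall>i\<in>{1..M}. \<forall>n\<ge>1. norm (y i n) \<le> Y i" by metis
  have TY: "norm (T i (y i n)) \<le> Y i + 2 * norm p" if "i \<in> {1..M}" "n \<ge> 1" for i n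
  proof -
    have "norm (T i (y i n)) \<le> norm (T i (y i n) - T i p) + norm p"
      using p that norm_triangle_sub[of "T i (y i n)" "T i p"] by auto
    also have "\<dots> \<le> norm (y i n - p) + norm p" using nonexp that by auto
    also have "\<dots> \<le> norm (y i n) + norm p + norm p" using norm_triangle_ineq4[of "y i n" p] by auto
    finally show ?thesis using Y that by fastforce
  qed
  define Wb where "Wb = (\<Sum>i\<in>{1..M}. norm (u i) + \<bar>Y i\<bar> + 2 * norm p) + norm (x 1)"
  have Wb0: "Wb \<ge> 0" unfolding Wb_def by (auto intro!: sum_nonneg add_nonneg_nonneg)
  have wsucc: "norm (w (i+1) n) \<le> Wb" if "i \<in> {1..M}" "n \<ge> 1" for i n
  proof -
    have a: "0 < \<alpha> n" "\<alpha> n \<le> 1" using C_range that by auto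
    have "norm (w (i+1) n) \<le> norm (\<alpha> n *\<^sub>R u i) + norm ((1 - \<alpha> n) *\<^sub>R T i (y i n))"
      using alg_w that norm_triangle_ineq by metis
    also have "\<dots> = \<alpha> n * norm (u i) + (1 - \<alpha> n) * norm (T i (y i n))" using a by simp
    also have "\<dots> \<le> 1 * norm (u i) + 1 * norm (T i (y i n))"
      using a by (intro add_mono mult_right_mono) auto
    also have "\<dots> \<le> norm (u i) + \<bar>Y i\<bar> + 2 * norm p" using TY[OF that] by auto
    also have "\<dots> \<le> (\<Sum>i\<in>{1..M}. norm (u i) + \<bar>Y i\<bar> + 2 * norm p)"
      by (rule member_le_sum[where f="\<lambda>i. norm (u i) + \<bar>Y i\<bar> + 2 * norm p"]) (use that in auto)
    finally show ?thesis unfolding Wb_def using norm_ge_zero[of "x 1"] by linarith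
  qed
  have xb: "norm (x n) \<le> Wb" if "n \<ge> 1" for n
  proof (cases "n = 1")
    case True then show ?thesis unfolding Wb_def by (auto intro!: sum_nonneg add_nonneg_nonneg)
  next
    case False
    then obtain m where m: "n = m + 1" "m \<ge> 1" using \<open>n \<ge> 1\<close> False by (cases n) auto
    then show ?thesis using alg_x wsucc[of M m] M by auto
  qed
  have wb: "norm (w i n) \<le> Wb" if iM: "i \<in> {1..M}" "n \<ge> 1" for i n
  proof (cases "i = 1")
    case True then show ?thesis using alg_w1 xb that by auto
  next
    case False
    then obtain j where "i = j + 1" "j \<in> {1..M}" using iM by (cases i) auto
    then show ?thesis using wsucc that by auto
  qed
  have wb': "norm (w i n) \<le> Wb + norm (w i 0)" if "i \<in> {1..M}" for i n
  proof (cases "n = 0")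
    case True then show ?thesis using Wb0 by simp
  next
    case False then have "norm (w i n) \<le> Wb" using wb[OF that] by simp
    then show ?thesis using norm_ge_zero[of "w i 0"] by linarith
  qed
  define Zb where "Zb i = 3 * Wb + norm (w i 0)" for i
  have zb: "norm (z i n) \<le> Zb i" if "i \<in> {1..M}" "n \<ge> 1" for i n
  proof -
    have t: "0 \<le> \<theta> n" "\<theta> n \<le> 1" using C_range that by auto
    have "norm (z i n) \<le> norm (w i n) + norm (\<theta> n *\<^sub>R (w i n - w i (n-1)))"
      using alg_z that norm_triangle_ineq by metis
    also have "\<dots> = norm (w i n) + \<theta> n * norm (w i n - w i (n-1))" using t by simp
    also have "\<dots> \<le> norm (w i n) + 1 * (norm (w i n) + norm (w i (n-1)))"
      using t norm_triangle_ineq4[of "w i n" "w i (n-1)"]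
      by (intro add_left_mono mult_mono) auto
    also have "\<dots> \<le> Wb + 1 * (Wb + (Wb + norm (w i 0)))"
      using wb[OF that] wb'[OF that(1), of "n-1"] by auto
    finally show ?thesis unfolding Zb_def by auto
  qed
  define K where "K i = norm (gh i 0) + (1 / L i) * Zb i" for i
  have gb: "norm (gh i (z i n)) \<le> K i" if "i \<in> {1..M}" "n \<ge> 1" for i n
  proof -
    have "norm (gh i (z i n)) \<le> norm (gh i (z i n) - gh i 0) + norm (gh i 0)"
      using norm_triangle_sub[of "gh i (z i n)" "gh i 0"] by auto
    also have "\<dots> \<le> (1 / L i) * norm (z i n - 0) + norm (gh i 0)"
      using A2_Lip that by (intro add_right_mono) blast
    also have "\<dots> \<le> (1 / L i) * Zb i + norm (gh i 0)"
      using zb[OF that] A2_L that by (intro add_right_mono mult_left_mono) (auto simp: less_imp_le)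
    finally show ?thesis unfolding K_def by auto
  qed
  have "eventually (\<lambda>n. \<beta> n < 1/2) sequentially"
    using order_tendstoD(2)[OF C_lim(3), of "1/2"] by auto
  then obtain N0 where N0: "\<forall>n\<ge>N0. \<beta> n < 1/2" unfolding eventually_sequentially by auto
  define N where "N = max N0 1"
  have db: "\<forall>n\<ge>1. norm (d i n) \<le> (MAX k\<in>{1..N}. norm (d i k)) + 2 * K i" if i: "i \<in> {1..M}" for i
  proof -
    define B where "B = (MAX k\<in>{1..N}. norm (d i k)) + 2 * K i"
    have Mx: "norm (d i k) \<le> (MAX k\<in>{1..N}. norm (d i k))" if "k \<in> {1..N}" for k
      using that by (intro Max_ge) auto
    have M0: "0 \<le> (MAX k\<in>{1..N}. norm (d i k))"
      using Mx[of 1] N_def by (meson atLeastAtMost_iff le_numeral_extra(4) max.cobounded2 norm_ge_zero order_trans)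
    have K0: "0 \<le> K i" using gb[OF i, of 1] norm_ge_zero order_trans by blast
    have "n \<ge> 1 \<longrightarrow> norm (d i n) \<le> B" for n
    proof (induction n)
      case 0 then show ?case by auto
    next
      case (Suc m)
      show ?case
      proof (cases "Suc m \<le> N")
        case True
        then have "norm (d i (Suc m)) \<le> (MAX k\<in>{1..N}. norm (d i k))" by (intro Mx) auto
        then show ?thesis using K0 unfolding B_def by linarith
      next
        case False
        then have m: "m \<ge> N" "m \<ge> 1" "m \<ge> N0" unfolding N_def by auto
        have bb: "0 < \<beta> m" "\<beta> m \<le> 1/2" using C_range N0 m by auto
        have IH: "norm (d i m) \<le> B" using Suc m by auto
        have "norm (d i (Suc m)) \<le> norm (gh i (z i m)) + norm (\<beta> m *\<^sub>R d i m)"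
          using alg_d i m(2) norm_triangle_ineq[of "- gh i (z i m)" "\<beta> m *\<^sub>R d i m"] by auto
        also have "\<dots> = norm (gh i (z i m)) + \<beta> m * norm (d i m)" using bb by simp
        also have "\<dots> \<le> K i + (1/2) * B"
          using gb[OF i m(2)] bb IH by (intro add_mono mult_mono) auto
        also have "\<dots> \<le> B" unfolding B_def using M0 by auto
        finally show ?thesis by simp
      qed
    qed
    then show ?thesis unfolding B_def by auto
  qed
  have c1: "bounded ((\<lambda>n. T i (y i n)) ` {1..})" if "i \<in> {1..M}" for i
    unfolding bounded_iff using TY[OF that] by (intro exI[of _ "Y i + 2 * norm p"]) auto
  have c2: "bounded ((\<lambda>n. x n) ` {1..})"
    unfolding bounded_iff using xb by (intro exI[of _ Wb]) auto
  have c3: "bounded ((\<lambda>n. w i n) ` {1..})" if "i \<in> {1..M}" for i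
    unfolding bounded_iff using wb[OF that] by (intro exI[of _ Wb]) auto
  have c4: "bounded ((\<lambda>n. z i n) ` {1..})" if "i \<in> {1..M}" for i
    unfolding bounded_iff using zb[OF that] by (intro exI[of _ "Zb i"]) auto
  have c5: "bounded ((\<lambda>n. d i n) ` {1..})" if "i \<in> {1..M}" for i
    unfolding bounded_iff using db[OF that] by (intro exI[of _ "(MAX k\<in>{1..N}. norm (d i k)) + 2 * K i"]) auto
  show ?thesis using c1 c2 c3 c4 c5 by blast
qed

end
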